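(* Let $O = \{1,2,3,4\}^N$ be the set of ontic states of a system of $N$ elementary subsystems, and let $\mathcal{Q} = \{Q_1,\dots,Q_{2N}\}$ be a canonical set of $2N$ binary questions, with $Q_i$ identified with the partition $(M_{i,0}, M_{i,1})$ of $O$. Let $E \subseteq O$ be the ontic basis of a valid epistemic state which consists of known answers $a_i \in \{0,1\}$ to a subset $\mathcal{E} \subseteq \{1,\dots,2N\}$ of $k = |\mathcal{E}|$ of these questions, so that $E = \bigcap_{i \in \mathcal{E}} M_{i,a_i}$ is the set of ontic states compatible with these answers. Then $|E| = 2^{2N-k}$.
   Context: In Spekkens' toy theory, a system of $N$ elementary subsystems has ontic states $O=\{1,2,3,4\}^N$. A binary question "is the ontic state in $M_{0}$?" is identified with the partition $(M_0, O\setminus M_0)$ of $O$. A canonical set of questions is a set of binary questions such that every ontic state is uniquely specified by its answers; for $N$ elementary systems it consists of $2N$ questions. An epistemic state is specified by the answers to some of the questions of a canonical set, and its ontic basis is the set of ontic states compatible with these answers. An epistemic state is valid if it obeys the knowledge balance principle (at most half of the questions of a canonical set are answered), both globally and for the marginal on every subset of subsystems. *)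

theory Defs
  imports Main "HOL-Library.FuncSet"
begin

definition ontic_states :: "nat \<Rightarrow> (nat \<Rightarrow> nat) set" where
  "ontic_states N = {0..<N} \<rightarrow>\<^sub>E {1,2,3,4}"

text \<open>A binary question is given by the set M0 (answer 0); answer 1 is O - M0.
Questions are indexed by 0..<2N.  Canonical: every ontic state is uniquely determined
by its answers.\<close>
definition canonical_questions :: "nat \<Rightarrow> (nat \<Rightarrow> (nat \<Rightarrow> nat) set) \<Rightarrow> bool" where
  "canonical_questions N M \<longleftrightarrow>
     (\<forall>i<2*N. M i \<subseteq> ontic_states N) \<and>
     (\<forall>x\<in>ontic_states N. \<forall>y\<in>ontic_states N.
        (\<forall>i<2*N. (x \<in> M i \<longleftrightarrow> y \<in> M i)) \<longrightarrow> x = y)"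

definition answer_set :: "nat \<Rightarrow> (nat \<Rightarrow> (nat \<Rightarrow> nat) set) \<Rightarrow> nat \<Rightarrow> nat \<Rightarrow> (nat \<Rightarrow> nat) set" where
  "answer_set N M i a = (if a = 0 then M i else ontic_states N - M i)"

definition ontic_basis :: "nat \<Rightarrow> (nat \<Rightarrow> (nat \<Rightarrow> nat) set) \<Rightarrow> nat set \<Rightarrow> (nat \<Rightarrow> nat) \<Rightarrow> (nat \<Rightarrow> nat) set" where
  "ontic_basis N M Es a = {x \<in> ontic_states N. \<forall>i\<in>Es. x \<in> answer_set N M i (a i)}"

definition marginal :: "nat set \<Rightarrow> (nat \<Rightarrow> nat) set \<Rightarrow> (nat \<Rightarrow> nat) set" where
  "marginal S E = (\<lambda>x. restrict x S) ` E"

text \<open>For the marginal on a nonempty set S of subsystems: the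
maximal number of answered questions of a canonical set for S, namely
2|S| - log2 |marginal|, is at most |S|, i.e. the marginal ontic basis has at least
2^|S| elements.\<close>
definition valid_epistemic_state :: "nat \<Rightarrow> (nat \<Rightarrow> (nat \<Rightarrow> nat) set) \<Rightarrow> nat set \<Rightarrow> (nat \<Rightarrow> nat) \<Rightarrow> bool" where
  "valid_epistemic_state N M Es a \<longleftrightarrow>
     card Es \<le> N \<and>
     (\<forall>S. S \<subseteq> {0..<N} \<and> S \<noteq> {} \<longrightarrow>
        2 ^ card S \<le> card (marginal S (ontic_basis N M Es a)))"

end

theory Submission
  imports Defs
begin

lemma card_fixed:
  assumes "finite A" "Es \<subseteq> A"
  shows "card {v \<in> A \<rightarrow>\<^sub>E (UNIV::bool set). \<forall>i\<in>Es. v i = b i} = 2 ^ (card A - card Es)"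
proof -
  let ?S = "{v \<in> A \<rightarrow>\<^sub>E (UNIV::bool set). \<forall>i\<in>Es. v i = b i}"
  have "bij_betw (\<lambda>v. restrict v (A - Es)) ?S ((A - Es) \<rightarrow>\<^sub>E (UNIV::bool set))"
  proof (rule bij_betw_byWitness[where f' = "\<lambda>w i. if i \<in> Es then b i else w i"])
    show "\<forall>v\<in>?S. (\<lambda>i. if i \<in> Es then b i else restrict v (A - Es) i) = v"
      using assms(2) by (auto simp: PiE_def extensional_def fun_eq_iff)
    show "\<forall>w\<in>(A - Es) \<rightarrow>\<^sub>E UNIV. restrict (\<lambda>i. if i \<in> Es then b i else w i) (A - Es) = w"
      by (auto simp: PiE_def extensional_def fun_eq_iff)
    show "(\<lambda>v. restrict v (A - Es)) ` ?S \<subseteq> (A - Es) \<rightarrow>\<^sub>E UNIV" by auto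
    show "(\<lambda>w i. if i \<in> Es then b i else w i) ` ((A - Es) \<rightarrow>\<^sub>E UNIV) \<subseteq> ?S"
      using assms(2) by (auto simp: PiE_def extensional_def)
  qed
  then have "card ?S = card ((A - Es) \<rightarrow>\<^sub>E (UNIV::bool set))" by (rule bij_betw_same_card)
  also have "\<dots> = 2 ^ card (A - Es)" by (simp add: card_PiE assms(1))
  also have "card (A - Es) = card A - card Es"
    using assms by (simp add: card_Diff_subset finite_subset)
  finally show ?thesis .
qed

theorem mainTheorem2:
  fixes N :: nat and M :: "nat \<Rightarrow> (nat \<Rightarrow> nat) set"
    and Es :: "nat set" and a :: "nat \<Rightarrow> nat"
  assumes "canonical_questions N M"
    and "Es \<subseteq> {0..<2*N}"
    and "\<forall>i\<in>Es. a i \<in> {0,1}"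
    and "valid_epistemic_state N M Es a"
  shows "card (ontic_basis N M Es a) = 2 ^ (2*N - card Es)"
proof -
  let ?O = "ontic_states N"
  let ?T = "{0..<2*N} \<rightarrow>\<^sub>E (UNIV::bool set)"
  define f where "f x = restrict (\<lambda>i. x \<in> M i) {0..<2*N}" for x
  have inj: "inj_on f ?O"
  proof (rule inj_onI)
    fix x y assume xy: "x \<in> ?O" "y \<in> ?O" "f x = f y"
    have "\<forall>i<2*N. (x \<in> M i \<longleftrightarrow> y \<in> M i)"
    proof (intro allI impI)
      fix i assume "i < 2*N"
      then have "f x i = (x \<in> M i)" "f y i = (y \<in> M i)" by (auto simp: f_def)
      then show "x \<in> M i \<longleftrightarrow> y \<in> M i" using xy(3) by simp
    qed
    then show "x = y" using assms(1) xy(1,2) unfolding canonical_questions_def by blast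
  qed
  have cO: "card ?O = 4 ^ N" by (simp add: ontic_states_def card_PiE numeral_eq_Suc)
  have cT: "card ?T = 4 ^ N" by (simp add: card_PiE power_mult)
  have finO: "finite ?O" by (simp add: ontic_states_def finite_PiE)
  have finT: "finite ?T" by (simp add: finite_PiE)
  have sub: "f ` ?O \<subseteq> ?T" by (auto simp: f_def)
  have img: "f ` ?O = ?T"
    by (rule card_subset_eq[OF finT sub]) (simp add: card_image[OF inj] cO cT)
  define b where "b i = (a i = 0)" for i
  have mem: "x \<in> ontic_basis N M Es a \<longleftrightarrow> x \<in> ?O \<and> (\<forall>i\<in>Es. f x i = b i)" for x
  proof -
    have "x \<in> answer_set N M i (a i) \<longleftrightarrow> f x i = b i" if "x \<in> ?O" "i \<in> Es" for i
    proof -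
      have i: "i < 2*N" using that(2) assms(2) by auto
      have "a i = 0 \<or> a i = 1" using that(2) assms(3) by auto
      then show ?thesis using i that(1) unfolding answer_set_def f_def b_def by auto
    qed
    then show ?thesis unfolding ontic_basis_def by blast
  qed
  have eq: "f ` ontic_basis N M Es a = {v \<in> ?T. \<forall>i\<in>Es. v i = b i}"
  proof
    show "f ` ontic_basis N M Es a \<subseteq> {v \<in> ?T. \<forall>i\<in>Es. v i = b i}"
      using sub mem by blast
    show "{v \<in> ?T. \<forall>i\<in>Es. v i = b i} \<subseteq> f ` ontic_basis N M Es a"
    proof
      fix v assume v: "v \<in> {v \<in> ?T. \<forall>i\<in>Es. v i = b i}"
      then obtain x where "x \<in> ?O" "v = f x" using img by (metis (no_types, lifting) imageE mem_Collect_eq)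
      then show "v \<in> f ` ontic_basis N M Es a" using v mem by blast
    qed
  qed
  have "inj_on f (ontic_basis N M Es a)"
    by (rule inj_on_subset[OF inj]) (auto simp: ontic_basis_def)
  then have "card (ontic_basis N M Es a) = card {v \<in> ?T. \<forall>i\<in>Es. v i = b i}"
    using eq card_image by metis
  also have "\<dots> = 2 ^ (2*N - card Es)"
    using card_fixed[of "{0..<2*N}" Es b] assms(2) by simp
  finally show ?thesis .
qed

end
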